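(* Let $n,v\ge1$, $\mathcal{R}=\mathbb{F}_q[x_1,\dots,x_v]/\langle x_1^{i_1}\cdots x_v^{i_v}\mid i_1+\dots+i_v=n\rangle$, and let $I$ be an ideal of $\mathcal{R}$. Then the number of additive characters $\psi$ on $\mathcal{R}$ such that $I$ is the ideal maximally contained in $\ker(\psi)$ (i.e. $I$ is contained in $\ker\psi$ and contains every ideal of $\mathcal{R}$ contained in $\ker\psi$) is \[ \frac{|\mathcal{R}|}{|I|}\cdot\begin{cases}1 & \dim(\operatorname{Soc}(\mathcal{R}/I))=0,\\ 1-\frac1q & \dim(\operatorname{Soc}(\mathcal{R}/I))=1,\\ 0 & \text{otherwise.}\end{cases} \]
   Context: The socle $\operatorname{Soc}(\mathcal{R}/I)$ is the $\mathbb{F}_q$-subspace $\{f\in\mathcal{R}/I\mid x_1f=0,\dots,x_vf=0\}$ of $\mathcal{R}/I$, and $\dim$ denotes dimension over $\mathbb{F}_q$. An additive character is a homomorphism from $(\mathcal{R},+)$ to the complex unit circle. *)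

theory Defs
  imports "HOL-Algebra.Ideal" "HOL-Library.Function_Algebras" Complex_Main
begin

text \<open>Model of R = F_q[x_1..x_v] / (monomials of total degree n): elements are
  coefficient functions on exponent vectors e (indices 0..v-1) of total degree < n.\<close>

definition Rmonos :: "nat \<Rightarrow> nat \<Rightarrow> (nat \<Rightarrow> nat) set" where
  "Rmonos v n = {e. (\<forall>i\<ge>v. e i = 0) \<and> (\<Sum>i<v. e i) < n}"

definition Rcar :: "nat \<Rightarrow> nat \<Rightarrow> ((nat \<Rightarrow> nat) \<Rightarrow> 'a::field) set" where
  "Rcar v n = {f. \<forall>e. e \<notin> Rmonos v n \<longrightarrow> f e = 0}"

definition Rmult :: "nat \<Rightarrow> nat \<Rightarrow> ((nat \<Rightarrow> nat) \<Rightarrow> 'a::field) \<Rightarrow> ((nat \<Rightarrow> nat) \<Rightarrow> 'a) \<Rightarrow> ((nat \<Rightarrow> nat) \<Rightarrow> 'a)" where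
  "Rmult v n f g = (\<lambda>e. if e \<in> Rmonos v n
      then (\<Sum>a\<in>{a\<in>Rmonos v n. a \<le> e}. f a * g (e - a)) else 0)"

definition Rone :: "((nat \<Rightarrow> nat) \<Rightarrow> 'a::field)" where
  "Rone = (\<lambda>e. if e = (\<lambda>_. 0) then 1 else 0)"

definition Rring :: "nat \<Rightarrow> nat \<Rightarrow> ((nat \<Rightarrow> nat) \<Rightarrow> 'a::field) ring" where
  "Rring v n = \<lparr>carrier = Rcar v n, monoid.mult = Rmult v n, one = Rone,
                 zero = (\<lambda>_. 0), add = (+)\<rparr>"

text \<open>The variable x_i (i < v), i.e. the class of x_{i+1}.\<close>
definition xvar :: "nat \<Rightarrow> nat \<Rightarrow> nat \<Rightarrow> ((nat \<Rightarrow> nat) \<Rightarrow> 'a::field)" where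
  "xvar v n i = (\<lambda>e. if e = (\<lambda>j. if j = i then 1 else 0) \<and> e \<in> Rmonos v n then 1 else 0)"

definition Rscale :: "'a::field \<Rightarrow> ((nat \<Rightarrow> nat) \<Rightarrow> 'a) \<Rightarrow> ((nat \<Rightarrow> nat) \<Rightarrow> 'a)" where
  "Rscale c f = (\<lambda>e. c * f e)"

text \<open>Preimage in R of Soc(R/I): {f | x_i f \<in> I for all i}.\<close>
definition soc_pre :: "nat \<Rightarrow> nat \<Rightarrow> ((nat \<Rightarrow> nat) \<Rightarrow> 'a::field) set \<Rightarrow> ((nat \<Rightarrow> nat) \<Rightarrow> 'a) set" where
  "soc_pre v n I = {f \<in> Rcar v n. \<forall>i<v. Rmult v n (xvar v n i) f \<in> I}"

text \<open>dim_{F_q} Soc(R/I) = dim(soc_pre I) - dim I (dimension of the quotient space).\<close>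
definition socle_dim :: "nat \<Rightarrow> nat \<Rightarrow> ((nat \<Rightarrow> nat) \<Rightarrow> 'a::field) set \<Rightarrow> nat" where
  "socle_dim v n I = vector_space.dim Rscale (soc_pre v n I) - vector_space.dim Rscale I"

definition add_char :: "nat \<Rightarrow> nat \<Rightarrow> (((nat \<Rightarrow> nat) \<Rightarrow> 'a::field) \<Rightarrow> complex) \<Rightarrow> bool" where
  "add_char v n \<psi> \<longleftrightarrow> \<psi> \<in> extensional (Rcar v n) \<and>
     (\<forall>f\<in>Rcar v n. cmod (\<psi> f) = 1) \<and>
     (\<forall>f\<in>Rcar v n. \<forall>g\<in>Rcar v n. \<psi> (f + g) = \<psi> f * \<psi> g)"

definition char_ker :: "nat \<Rightarrow> nat \<Rightarrow> (((nat \<Rightarrow> nat) \<Rightarrow> 'a::field) \<Rightarrow> complex) \<Rightarrow> ((nat \<Rightarrow> nat) \<Rightarrow> 'a) set" where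
  "char_ker v n \<psi> = {f \<in> Rcar v n. \<psi> f = 1}"

end

theory Submission
  imports Defs
begin


lemma (in vector_space) card_subspace_fin:
  assumes fW: "finite W" and sW: "subspace W" and fa: "finite (UNIV::'a set)"
  shows "card W = card (UNIV::'a set) ^ dim W"
proof -
  obtain B where B: "B \<subseteq> W" "independent B" "W \<subseteq> span B" "card B = dim W"
    using basis_exists by blast
  have fB: "finite B" using B(1) fW finite_subset by blast
  have spB: "span B = W" using span_subspace[OF B(1) B(3) sW] .
  let ?F = "\<lambda>u. \<Sum>v\<in>B. u v *s v"
  have img: "?F ` (PiE B (\<lambda>_. UNIV)) = W"
  proof -
    have "?F ` (PiE B (\<lambda>_. UNIV)) = range ?F"
    proof
      show "range ?F \<subseteq> ?F ` (PiE B (\<lambda>_. UNIV))"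
      proof
        fix x assume "x \<in> range ?F"
        then obtain u where x: "x = ?F u" by blast
        have "x = ?F (restrict u B)" unfolding x by (rule sum.cong) auto
        moreover have "restrict u B \<in> PiE B (\<lambda>_. UNIV)" by simp
        ultimately show "x \<in> ?F ` (PiE B (\<lambda>_. UNIV))" by (rule image_eqI)
      qed
    next
      show "?F ` (PiE B (\<lambda>_. UNIV)) \<subseteq> range ?F" by blast
    qed
    then show ?thesis using span_finite[OF fB] spB by simp
  qed
  have inj: "inj_on ?F (PiE B (\<lambda>_. UNIV))"
  proof (rule inj_onI)
    fix u u' assume u: "u \<in> PiE B (\<lambda>_. UNIV)" and u': "u' \<in> PiE B (\<lambda>_. UNIV)" and eq: "?F u = ?F u'"
    have "(\<Sum>v\<in>B. (u v - u' v) *s v) = ?F u - ?F u'"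
      by (simp add: scale_left_diff_distrib sum_subtractf)
    then have s0: "(\<Sum>v\<in>B. (u v - u' v) *s v) = 0" using eq by simp
    have ind: "\<And>S w. S \<subseteq> B \<Longrightarrow> finite S \<Longrightarrow> (\<Sum>v\<in>S. w v *s v) = 0 \<Longrightarrow> (\<forall>v\<in>S. w v = 0)"
      using B(2) unfolding independent_explicit_finite_subsets by simp
    have "\<forall>v\<in>B. u v - u' v = 0" by (rule ind[OF order_refl fB s0])
    then show "u = u'" by (intro PiE_ext[OF u u']) auto
  qed
  have "card W = card (PiE B (\<lambda>_. UNIV::'a set))"
    using card_image[OF inj] img by simp
  also have "\<dots> = card (UNIV::'a set) ^ card B" by (simp add: card_PiE fB)
  finally show ?thesis using B(4) by simp
qed


definition grp :: "'b::ring_1 set \<Rightarrow> bool" where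
  "grp S \<longleftrightarrow> 0 \<in> S \<and> (\<forall>x\<in>S. \<forall>y\<in>S. x + y \<in> S) \<and> (\<forall>x\<in>S. - x \<in> S)"

definition chr :: "'b::ring_1 set \<Rightarrow> ('b \<Rightarrow> complex) \<Rightarrow> bool" where
  "chr G \<psi> \<longleftrightarrow> \<psi> \<in> extensional G \<and> (\<forall>f\<in>G. cmod (\<psi> f) = 1) \<and>
     (\<forall>f\<in>G. \<forall>g\<in>G. \<psi> (f + g) = \<psi> f * \<psi> g)"

definition Ext :: "'b::ring_1 set \<Rightarrow> 'b set \<Rightarrow> ('b \<Rightarrow> complex) \<Rightarrow> ('b \<Rightarrow> complex) set" where
  "Ext G H \<chi> = {\<psi>. chr G \<psi> \<and> (\<forall>x\<in>H. \<psi> x = \<chi> x)}"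

lemma grp_zero: "grp S \<Longrightarrow> 0 \<in> S" by (simp add: grp_def)
lemma grp_add: "grp S \<Longrightarrow> x \<in> S \<Longrightarrow> y \<in> S \<Longrightarrow> x + y \<in> S" by (simp add: grp_def)
lemma grp_neg: "grp S \<Longrightarrow> x \<in> S \<Longrightarrow> - x \<in> S" by (simp add: grp_def)
lemma grp_diff: "grp S \<Longrightarrow> x \<in> S \<Longrightarrow> y \<in> S \<Longrightarrow> x - y \<in> S"
  using grp_add[of S x "- y"] grp_neg[of S y] by simp

lemma grp_nat: "grp S \<Longrightarrow> g \<in> S \<Longrightarrow> of_nat k * g \<in> S"
proof (induction k)
  case 0 then show ?case by (simp add: grp_zero)
next
  case (Suc k)
  have "of_nat (Suc k) * g = g + of_nat k * g" by (simp add: distrib_right)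
  then show ?case using Suc grp_add by metis
qed

lemma chr_norm: "chr G \<psi> \<Longrightarrow> x \<in> G \<Longrightarrow> cmod (\<psi> x) = 1" by (simp add: chr_def)
lemma chr_add: "chr G \<psi> \<Longrightarrow> x \<in> G \<Longrightarrow> y \<in> G \<Longrightarrow> \<psi> (x + y) = \<psi> x * \<psi> y" by (simp add: chr_def)
lemma chr_nz: "chr G \<psi> \<Longrightarrow> x \<in> G \<Longrightarrow> \<psi> x \<noteq> 0" using chr_norm by fastforce

lemma chr_zero: assumes "chr G \<psi>" "grp G" shows "\<psi> 0 = 1"
proof -
  have z: "0 \<in> G" using assms(2) grp_zero by blast
  have "\<psi> 0 = \<psi> 0 * \<psi> 0" using chr_add[OF assms(1) z z] by simp
  moreover have "\<psi> 0 \<noteq> 0" using chr_nz[OF assms(1) z] .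
  ultimately show ?thesis by simp
qed

lemma chr_diff: assumes "chr G \<psi>" "grp G" "x \<in> G" "y \<in> G" shows "\<psi> (x - y) = \<psi> x / \<psi> y"
proof -
  have "\<psi> x = \<psi> ((x - y) + y)" by simp
  also have "\<dots> = \<psi> (x - y) * \<psi> y" using chr_add[OF assms(1) grp_diff[OF assms(2,3,4)] assms(4)] .
  finally show ?thesis using chr_nz[OF assms(1,4)] by (simp add: field_simps)
qed

lemma chr_nat: assumes "chr G \<psi>" "grp G" "g \<in> G" shows "\<psi> (of_nat k * g) = \<psi> g ^ k"
proof (induction k)
  case 0 then show ?case using chr_zero[OF assms(1,2)] by simp
next
  case (Suc k)
  have "of_nat (Suc k) * g = g + of_nat k * g" by (simp add: distrib_right)
  then show ?case using Suc chr_add[OF assms(1) assms(3) grp_nat[OF assms(2,3)]] by simp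
qed

lemma chr_restrict: assumes "chr G \<psi>" "K \<subseteq> G" "grp K" shows "chr K (restrict \<psi> K)"
  unfolding chr_def
proof (intro conjI ballI)
  show "restrict \<psi> K \<in> extensional K" by simp
next
  fix f assume "f \<in> K" then show "cmod (restrict \<psi> K f) = 1" using assms(1,2) chr_norm by auto
next
  fix f h assume fh: "f \<in> K" "h \<in> K"
  then have "f + h \<in> K" using assms(3) grp_add by blast
  then show "restrict \<psi> K (f + h) = restrict \<psi> K f * restrict \<psi> K h"
    using fh assms(2) chr_add[OF assms(1), of f h] by auto
qed

locale stepctx =
  fixes G H :: "'b::ring_1 set" and g :: 'b
  assumes grpG: "grp G" and finG: "finite G" and grpH: "grp H" and HG: "H \<subseteq> G"
    and gG: "g \<in> G" and gH: "g \<notin> H"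
begin

definition m where "m = (LEAST m. 0 < m \<and> of_nat m * g \<in> H)"
definition K where "K = {h + of_nat k * g | h k. h \<in> H \<and> k < m}"

lemma finH: "finite H" using finG HG finite_subset by blast

lemma diff_mult: "k1 \<le> k2 \<Longrightarrow> of_nat (k2 - k1) * g = of_nat k2 * g - of_nat k1 * g"
  by (simp add: of_nat_diff left_diff_distrib)

lemma ex_m: "\<exists>m. 0 < m \<and> of_nat m * g \<in> H"
proof -
  have sub: "range (\<lambda>k::nat. of_nat k * g) \<subseteq> G" using grp_nat[OF grpG gG] by blast
  have "\<not> inj (\<lambda>k::nat. of_nat k * g)"
  proof
    assume "inj (\<lambda>k::nat. of_nat k * g)"
    moreover have "finite (range (\<lambda>k::nat. of_nat k * g))" using sub finG finite_subset by blast
    ultimately have "finite (UNIV :: nat set)" using finite_imageD by blast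
    then show False by simp
  qed
  then obtain k1 k2 :: nat where ne: "k1 \<noteq> k2" and eq: "of_nat k1 * g = of_nat k2 * g"
    unfolding inj_def by blast
  have "\<exists>a b::nat. a < b \<and> of_nat a * g = of_nat b * g"
  proof (cases "k1 < k2")
    case True then show ?thesis using eq by blast
  next
    case False then have "k2 < k1" using ne by simp
    then show ?thesis using eq by metis
  qed
  then obtain a b :: nat where ab: "a < b" "of_nat a * g = of_nat b * g" by blast
  have "of_nat (b - a) * g = 0" using diff_mult[of a b] ab by simp
  then show ?thesis using ab(1) grp_zero[OF grpH] by (intro exI[of _ "b - a"]) simp
qed

lemma m_pos: "0 < m" and m_in: "of_nat m * g \<in> H"
  using LeastI_ex[OF ex_m] unfolding m_def by auto

lemma m_min: "0 < j \<Longrightarrow> j < m \<Longrightarrow> of_nat j * g \<notin> H"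
  using not_less_Least[of j "\<lambda>m. 0 < m \<and> of_nat m * g \<in> H"] unfolding m_def by blast

lemma m_gt1: "1 < m"
proof -
  have "m \<noteq> 1" using m_in gH by auto
  then show ?thesis using m_pos by linarith
qed

lemma uniq_aux:
  assumes "h \<in> H" "h' \<in> H" "k < k'" "k' < m" "h + of_nat k * g = h' + of_nat k' * g"
  shows False
proof -
  have "of_nat (k' - k) * g = h - h'"
    using assms(5) diff_mult[of k k'] assms(3) by (simp add: algebra_simps)
  then have "of_nat (k' - k) * g \<in> H" using grp_diff[OF grpH assms(1,2)] by metis
  moreover have "0 < k' - k" "k' - k < m" using assms(3,4) by auto
  ultimately show False using m_min by blast
qed

lemma uniq:
  assumes "h \<in> H" "h' \<in> H" "k < m" "k' < m" "h + of_nat k * g = h' + of_nat k' * g"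
  shows "k = k' \<and> h = h'"
proof -
  have "k = k'"
  proof (rule ccontr)
    assume "k \<noteq> k'"
    then consider "k < k'" | "k' < k" by linarith
    then show False
    proof cases
      case 1 show False by (rule uniq_aux[OF assms(1,2) 1 assms(4,5)])
    next
      case 2 show False by (rule uniq_aux[OF assms(2,1) 2 assms(3) assms(5)[symmetric]])
    qed
  qed
  then show ?thesis using assms(5) by simp
qed

lemma KI: "h \<in> H \<Longrightarrow> k < m \<Longrightarrow> h + of_nat k * g \<in> K" unfolding K_def by blast
lemma KE: assumes "x \<in> K" obtains h k where "h \<in> H" "k < m" "x = h + of_nat k * g"
  using assms unfolding K_def by blast

lemma K_sub: "K \<subseteq> G"
proof
  fix x assume "x \<in> K"
  then obtain h k where "h \<in> H" "k < m" "x = h + of_nat k * g" by (rule KE)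
  then show "x \<in> G" using grp_add[OF grpG] HG grp_nat[OF grpG gG] by blast
qed

lemma H_K: "H \<subseteq> K"
proof
  fix h assume "h \<in> H" then show "h \<in> K" using KI[of h 0] m_pos by simp
qed

lemma g_K: "g \<in> K" using KI[OF grp_zero[OF grpH] m_gt1] by simp

lemma K_add_rep:
  assumes "h1 \<in> H" "k1 < m" "h2 \<in> H" "k2 < m"
  shows "(k1 + k2 < m \<longrightarrow> (h1 + of_nat k1 * g) + (h2 + of_nat k2 * g) = (h1 + h2) + of_nat (k1 + k2) * g)
       \<and> (\<not> k1 + k2 < m \<longrightarrow> (h1 + of_nat k1 * g) + (h2 + of_nat k2 * g) = (h1 + h2 + of_nat m * g) + of_nat (k1 + k2 - m) * g \<and> k1 + k2 - m < m)"
proof (intro conjI impI)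
  show "(h1 + of_nat k1 * g) + (h2 + of_nat k2 * g) = (h1 + h2) + of_nat (k1 + k2) * g"
    by (simp add: algebra_simps)
next
  assume "\<not> k1 + k2 < m"
  then have "m \<le> k1 + k2" by simp
  then show "(h1 + of_nat k1 * g) + (h2 + of_nat k2 * g) = (h1 + h2 + of_nat m * g) + of_nat (k1 + k2 - m) * g"
    using diff_mult[of m "k1 + k2"] by (simp add: algebra_simps)
  show "k1 + k2 - m < m" using assms(2,4) by simp
qed

lemma grpK: "grp K"
  unfolding grp_def
proof (intro conjI ballI)
  show "0 \<in> K" using H_K grp_zero[OF grpH] by blast
next
  fix x y assume "x \<in> K" "y \<in> K"
  then obtain h1 k1 h2 k2 where r: "h1 \<in> H" "k1 < m" "x = h1 + of_nat k1 * g"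
    "h2 \<in> H" "k2 < m" "y = h2 + of_nat k2 * g" by (metis KE)
  have hh: "h1 + h2 \<in> H" "h1 + h2 + of_nat m * g \<in> H" using r grp_add[OF grpH] m_in by auto
  show "x + y \<in> K"
  proof (cases "k1 + k2 < m")
    case True
    then have "x + y = (h1 + h2) + of_nat (k1 + k2) * g" using K_add_rep[OF r(1,2,4,5)] r(3,6) by blast
    then show ?thesis using KI[OF hh(1) True] by simp
  next
    case False
    then have "x + y = (h1 + h2 + of_nat m * g) + of_nat (k1 + k2 - m) * g" "k1 + k2 - m < m"
      using K_add_rep[OF r(1,2,4,5)] r(3,6) by blast+
    then show ?thesis using KI[OF hh(2)] by simp
  qed
next
  fix x assume "x \<in> K"
  then obtain h k where r: "h \<in> H" "k < m" "x = h + of_nat k * g" by (rule KE)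
  show "- x \<in> K"
  proof (cases "k = 0")
    case True then show ?thesis using r H_K grp_neg[OF grpH] by auto
  next
    case False
    have "- x = (- h - of_nat m * g) + of_nat (m - k) * g"
      using r(3) diff_mult[of k m] r(2) by (simp add: algebra_simps)
    moreover have "- h - of_nat m * g \<in> H" using grp_diff[OF grpH grp_neg[OF grpH r(1)] m_in] .
    moreover have "m - k < m" using False m_pos by simp
    ultimately show ?thesis using KI by simp
  qed
qed

lemma card_K: "card K = m * card H" and finK: "finite K"
proof -
  have img: "K = (\<lambda>(h, k). h + of_nat k * g) ` (H \<times> {..<m})" unfolding K_def by auto
  have inj: "inj_on (\<lambda>(h, k). h + of_nat k * g) (H \<times> {..<m})"
    by (rule inj_onI) (auto dest: uniq)
  show "card K = m * card H" using card_image[OF inj] img by (simp add: card_cartesian_product)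
  show "finite K" using img finH by simp
qed

definition rep where "rep x = (SOME p. fst p \<in> H \<and> snd p < m \<and> x = fst p + of_nat (snd p) * g)"

lemma rep_eq: assumes "h \<in> H" "k < m" shows "rep (h + of_nat k * g) = (h, k)"
proof -
  let ?P = "\<lambda>p. fst p \<in> H \<and> snd p < m \<and> h + of_nat k * g = fst p + of_nat (snd p) * g"
  have "?P (h, k)" using assms by simp
  then have "?P (rep (h + of_nat k * g))" unfolding rep_def by (rule someI)
  then have "fst (rep (h + of_nat k * g)) = h \<and> snd (rep (h + of_nat k * g)) = k"
    using uniq[of "fst (rep (h + of_nat k * g))" h "snd (rep (h + of_nat k * g))" k] assms by auto
  then show ?thesis by (metis prod.collapse)
qed

definition psi where "psi \<chi> z = (\<lambda>x. if x \<in> K then \<chi> (fst (rep x)) * z ^ snd (rep x) else undefined)"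

lemma psi_eq: "h \<in> H \<Longrightarrow> k < m \<Longrightarrow> psi \<chi> z (h + of_nat k * g) = \<chi> h * z ^ k"
  unfolding psi_def using rep_eq KI by simp

end


context stepctx begin

lemma K_nat: "of_nat k * g \<in> K" using grp_nat[OF grpK g_K] .

lemma ext_val:
  assumes "\<psi> \<in> Ext K H \<chi>" "h \<in> H" "k < m"
  shows "\<psi> (h + of_nat k * g) = \<chi> h * \<psi> g ^ k"
proof -
  have c: "chr K \<psi>" and e: "\<forall>x\<in>H. \<psi> x = \<chi> x" using assms(1) unfolding Ext_def by auto
  have "\<psi> (h + of_nat k * g) = \<psi> h * \<psi> (of_nat k * g)"
    using chr_add[OF c] assms(2) H_K K_nat by blast
  also have "\<dots> = \<chi> h * \<psi> g ^ k" using e assms(2) chr_nat[OF c grpK g_K] by simp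
  finally show ?thesis .
qed

lemma psi_props:
  assumes chi: "chr H \<chi>" and z: "z ^ m = \<chi> (of_nat m * g)"
  shows "psi \<chi> z \<in> Ext K H \<chi>" "psi \<chi> z g = z"
proof -
  have nz: "cmod z = 1"
  proof -
    have "cmod z ^ m = 1" using z chr_norm[OF chi m_in] by (metis norm_power)
    then have "cmod z ^ m = 1 ^ m" by simp
    then show ?thesis using power_eq_imp_eq_base m_pos by (metis norm_ge_zero zero_le_one)
  qed
  have chi0: "\<chi> 0 = 1" using chr_zero[OF chi grpH] .
  have pe: "\<And>h k. h \<in> H \<Longrightarrow> k < m \<Longrightarrow> psi \<chi> z (h + of_nat k * g) = \<chi> h * z ^ k" by (rule psi_eq)
  have "psi \<chi> z (0 + of_nat 1 * g) = \<chi> 0 * z ^ 1" using pe[OF grp_zero[OF grpH] m_gt1] .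
  then show "psi \<chi> z g = z" using chi0 by simp
  have c: "chr K (psi \<chi> z)"
    unfolding chr_def
  proof (intro conjI ballI)
    show "psi \<chi> z \<in> extensional K" unfolding psi_def extensional_def by simp
  next
    fix x assume "x \<in> K"
    then obtain h k where r: "h \<in> H" "k < m" "x = h + of_nat k * g" by (rule KE)
    show "cmod (psi \<chi> z x) = 1" using r pe chr_norm[OF chi r(1)] nz by (simp add: norm_mult norm_power)
  next
    fix x y assume "x \<in> K" "y \<in> K"
    then obtain h1 k1 h2 k2 where r: "h1 \<in> H" "k1 < m" "x = h1 + of_nat k1 * g"
      "h2 \<in> H" "k2 < m" "y = h2 + of_nat k2 * g" by (metis KE)
    have hh: "h1 + h2 \<in> H" "h1 + h2 + of_nat m * g \<in> H" using r grp_add[OF grpH] m_in by auto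
    have px: "psi \<chi> z x = \<chi> h1 * z ^ k1" "psi \<chi> z y = \<chi> h2 * z ^ k2" using pe r by auto
    have ch12: "\<chi> (h1 + h2) = \<chi> h1 * \<chi> h2" using chr_add[OF chi r(1,4)] .
    show "psi \<chi> z (x + y) = psi \<chi> z x * psi \<chi> z y"
    proof (cases "k1 + k2 < m")
      case True
      then have "x + y = (h1 + h2) + of_nat (k1 + k2) * g" using K_add_rep[OF r(1,2,4,5)] r(3,6) by blast
      then have "psi \<chi> z (x + y) = \<chi> (h1 + h2) * z ^ (k1 + k2)" using pe[OF hh(1) True] by simp
      then show ?thesis using px ch12 by (simp add: power_add)
    next
      case False
      then have eq: "x + y = (h1 + h2 + of_nat m * g) + of_nat (k1 + k2 - m) * g" and lt: "k1 + k2 - m < m"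
        using K_add_rep[OF r(1,2,4,5)] r(3,6) by blast+
      then have "psi \<chi> z (x + y) = \<chi> (h1 + h2 + of_nat m * g) * z ^ (k1 + k2 - m)" using pe[OF hh(2) lt] by simp
      also have "\<chi> (h1 + h2 + of_nat m * g) = \<chi> h1 * \<chi> h2 * z ^ m"
        using chr_add[OF chi hh(1) m_in] ch12 z by simp
      also have "\<chi> h1 * \<chi> h2 * z ^ m * z ^ (k1 + k2 - m) = \<chi> h1 * \<chi> h2 * z ^ (k1 + k2)"
      proof -
        have "m + (k1 + k2 - m) = k1 + k2" using False by simp
        then show ?thesis by (metis mult.assoc power_add)
      qed
      finally show ?thesis using px by (simp add: power_add)
    qed
  qed
  have "\<forall>x\<in>H. psi \<chi> z x = \<chi> x"
  proof
    fix x assume "x \<in> H"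
    then show "psi \<chi> z x = \<chi> x" using pe[of x 0] m_pos by simp
  qed
  then show "psi \<chi> z \<in> Ext K H \<chi>" using c unfolding Ext_def by simp
qed

lemma ext_card:
  assumes chi: "chr H \<chi>"
  shows "finite (Ext K H \<chi>) \<and> card (Ext K H \<chi>) = m"
proof -
  let ?R = "{z::complex. z ^ m = \<chi> (of_nat m * g)}"
  have inj: "inj_on (\<lambda>\<psi>. \<psi> g) (Ext K H \<chi>)"
  proof (rule inj_onI)
    fix \<psi>1 \<psi>2 assume p: "\<psi>1 \<in> Ext K H \<chi>" "\<psi>2 \<in> Ext K H \<chi>" and eq: "\<psi>1 g = \<psi>2 g"
    have ex: "\<psi>1 \<in> extensional K" "\<psi>2 \<in> extensional K" using p unfolding Ext_def chr_def by auto
    show "\<psi>1 = \<psi>2"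
    proof (rule extensionalityI[OF ex])
      fix x assume "x \<in> K"
      then obtain h k where r: "h \<in> H" "k < m" "x = h + of_nat k * g" by (rule KE)
      show "\<psi>1 x = \<psi>2 x" using ext_val[OF p(1) r(1,2)] ext_val[OF p(2) r(1,2)] eq r(3) by simp
    qed
  qed
  have img: "(\<lambda>\<psi>. \<psi> g) ` (Ext K H \<chi>) = ?R"
  proof
    show "(\<lambda>\<psi>. \<psi> g) ` (Ext K H \<chi>) \<subseteq> ?R"
    proof
      fix z assume "z \<in> (\<lambda>\<psi>. \<psi> g) ` (Ext K H \<chi>)"
      then obtain \<psi> where p: "\<psi> \<in> Ext K H \<chi>" and zz: "z = \<psi> g" by blast
      have c: "chr K \<psi>" and e: "\<forall>x\<in>H. \<psi> x = \<chi> x" using p unfolding Ext_def by auto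
      have "\<psi> (of_nat m * g) = \<psi> g ^ m" using chr_nat[OF c grpK g_K] .
      then show "z \<in> ?R" using e m_in zz by simp
    qed
  next
    show "?R \<subseteq> (\<lambda>\<psi>. \<psi> g) ` (Ext K H \<chi>)"
    proof
      fix z assume "z \<in> ?R"
      then have z: "z ^ m = \<chi> (of_nat m * g)" by simp
      have p1: "psi \<chi> z \<in> Ext K H \<chi>" and p2: "psi \<chi> z g = z" using psi_props[OF chi z] by auto
      show "z \<in> (\<lambda>\<psi>. \<psi> g) ` (Ext K H \<chi>)"
        using image_eqI[where f="\<lambda>\<psi>. \<psi> g", OF p2[symmetric] p1] .
    qed
  qed
  have "card ?R = m"
    using card_nth_roots[OF chr_nz[OF chi m_in] m_pos] .
  moreover have finR: "finite ?R"
  proof (rule ccontr)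
    assume "infinite ?R" then have "card ?R = 0" by simp
    then show False using \<open>card ?R = m\<close> m_pos by simp
  qed
  have fE: "finite (Ext K H \<chi>)" by (rule finite_imageD[OF _ inj]) (simp add: img finR)
  have "card (Ext K H \<chi>) = card ?R" using card_image[OF inj] img by simp
  then show ?thesis using fE \<open>card ?R = m\<close> by simp
qed

end

lemma ext_count:
  assumes "finite G" "grp G" "grp H" "H \<subseteq> G" "chr H \<chi>"
  shows "finite (Ext G H \<chi>) \<and> card (Ext G H \<chi>) * card H = card G"
  using assms
proof (induction "card G - card H" arbitrary: H \<chi> rule: less_induct)
  case less
  show ?case
  proof (cases "H = G")
    case True
    have "Ext G H \<chi> = {\<chi>}"
    proof
      show "Ext G H \<chi> \<subseteq> {\<chi>}"
      proof
        fix \<psi> assume p: "\<psi> \<in> Ext G H \<chi>"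
        have "\<psi> \<in> extensional G" "\<chi> \<in> extensional G" using p less.prems True unfolding Ext_def chr_def by auto
        then have "\<psi> = \<chi>" using p True unfolding Ext_def by (auto intro: extensionalityI)
        then show "\<psi> \<in> {\<chi>}" by simp
      qed
      show "{\<chi>} \<subseteq> Ext G H \<chi>" using less.prems True unfolding Ext_def by simp
    qed
    then show ?thesis using True by simp
  next
    case False
    then obtain g where gG: "g \<in> G" and gH: "g \<notin> H" using less.prems(4) by blast
    interpret S: stepctx G H g using less.prems gG gH by unfold_locales auto
    let ?E = "Ext S.K H \<chi>"
    have E: "finite ?E" "card ?E = S.m" using S.ext_card[OF less.prems(5)] by auto
    have finK: "finite S.K" by (rule S.finK)
    have lt: "card G - card S.K < card G - card H"
    proof -
      have "H \<subset> S.K" using S.H_K S.g_K gH by blast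
      then have "card H < card S.K" using finK psubset_card_mono by blast
      moreover have "card S.K \<le> card G" using card_mono[OF less.prems(1) S.K_sub] .
      ultimately show ?thesis by linarith
    qed
    have IH: "\<And>\<chi>'. \<chi>' \<in> ?E \<Longrightarrow> finite (Ext G S.K \<chi>') \<and> card (Ext G S.K \<chi>') * card S.K = card G"
    proof -
      fix \<chi>' assume "\<chi>' \<in> ?E"
      then have "chr S.K \<chi>'" unfolding Ext_def by simp
      then show "finite (Ext G S.K \<chi>') \<and> card (Ext G S.K \<chi>') * card S.K = card G"
        using less.hyps[OF lt less.prems(1,2) S.grpK S.K_sub] by blast
    qed
    have U: "Ext G H \<chi> = (\<Union>\<chi>'\<in>?E. Ext G S.K \<chi>')"
    proof
      show "Ext G H \<chi> \<subseteq> (\<Union>\<chi>'\<in>?E. Ext G S.K \<chi>')"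
      proof
        fix \<psi> assume p: "\<psi> \<in> Ext G H \<chi>"
        have c: "chr G \<psi>" and e: "\<forall>x\<in>H. \<psi> x = \<chi> x" using p unfolding Ext_def by auto
        have "restrict \<psi> S.K \<in> ?E"
          using chr_restrict[OF c S.K_sub S.grpK] e S.H_K unfolding Ext_def by auto
        moreover have "\<psi> \<in> Ext G S.K (restrict \<psi> S.K)" using c unfolding Ext_def by simp
        ultimately show "\<psi> \<in> (\<Union>\<chi>'\<in>?E. Ext G S.K \<chi>')" by blast
      qed
    next
      show "(\<Union>\<chi>'\<in>?E. Ext G S.K \<chi>') \<subseteq> Ext G H \<chi>"
        using S.H_K unfolding Ext_def by auto
    qed
    have disj: "\<forall>i\<in>?E. \<forall>j\<in>?E. i \<noteq> j \<longrightarrow> Ext G S.K i \<inter> Ext G S.K j = {}"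
    proof (intro ballI impI)
      fix i j assume ij: "i \<in> ?E" "j \<in> ?E" "i \<noteq> j"
      show "Ext G S.K i \<inter> Ext G S.K j = {}"
      proof (rule ccontr)
        assume "Ext G S.K i \<inter> Ext G S.K j \<noteq> {}"
        then obtain \<psi> where "\<psi> \<in> Ext G S.K i" "\<psi> \<in> Ext G S.K j" by blast
        then have "\<forall>x\<in>S.K. i x = j x" unfolding Ext_def by auto
        moreover have "i \<in> extensional S.K" "j \<in> extensional S.K" using ij unfolding Ext_def chr_def by auto
        ultimately have "i = j" by (auto intro: extensionalityI)
        then show False using ij by simp
      qed
    qed
    have fin: "finite (Ext G H \<chi>)" using U E(1) IH by simp
    have "card (Ext G H \<chi>) = (\<Sum>\<chi>'\<in>?E. card (Ext G S.K \<chi>'))"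
      unfolding U by (rule card_UN_disjoint[OF E(1)]) (use IH disj in auto)
    then have "card (Ext G H \<chi>) * card S.K = (\<Sum>\<chi>'\<in>?E. card (Ext G S.K \<chi>') * card S.K)"
      by (simp add: sum_distrib_right)
    also have "\<dots> = (\<Sum>\<chi>'\<in>?E. card G)" using IH by simp
    also have "\<dots> = S.m * card G" using E by simp
    finally have "card (Ext G H \<chi>) * S.m * card H = S.m * card G" using S.card_K by (simp add: mult.assoc)
    then have "card (Ext G H \<chi>) * card H = card G" using S.m_pos by (simp add: mult.commute mult.left_commute)
    then show ?thesis using fin by simp
  qed
qed

lemma triv_count:
  assumes "finite G" "grp G" "grp H" "H \<subseteq> G"
  shows "finite {\<psi>. chr G \<psi> \<and> (\<forall>x\<in>H. \<psi> x = 1)} \<and> card {\<psi>. chr G \<psi> \<and> (\<forall>x\<in>H. \<psi> x = 1)} * card H = card G"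
proof -
  have c: "chr H (restrict (\<lambda>_. 1) H)" unfolding chr_def using assms(3) grp_add by auto
  have "Ext G H (restrict (\<lambda>_. 1) H) = {\<psi>. chr G \<psi> \<and> (\<forall>x\<in>H. \<psi> x = 1)}" unfolding Ext_def by auto
  then show ?thesis using ext_count[OF assms c] by simp
qed


definition dlt :: "nat \<Rightarrow> nat \<Rightarrow> nat" where "dlt i = (\<lambda>j. if j = i then 1 else 0)"
definition monoE :: "(nat \<Rightarrow> nat) \<Rightarrow> (nat \<Rightarrow> nat) \<Rightarrow> 'a::field" where "monoE a = (\<lambda>e. if e = a then 1 else 0)"

lemma sum_fun_apply: "(sum F A) x = (\<Sum>a\<in>A. F a x)"
  by (induction A rule: infinite_finite_induct) auto

lemma finite_Rmonos: "finite (Rmonos v n)"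
proof -
  have "Rmonos v n \<subseteq> {e. \<forall>x. (x \<in> {..<v} \<longrightarrow> e x \<in> {..n}) \<and> (x \<notin> {..<v} \<longrightarrow> e x = 0)}"
  proof
    fix e assume e: "e \<in> Rmonos v n"
    have "\<And>x. x < v \<Longrightarrow> e x \<le> n"
    proof -
      fix x assume "x < v"
      then have "e x \<le> (\<Sum>i<v. e i)" by (intro member_le_sum) auto
      then show "e x \<le> n" using e unfolding Rmonos_def by simp
    qed
    then show "e \<in> {e. \<forall>x. (x \<in> {..<v} \<longrightarrow> e x \<in> {..n}) \<and> (x \<notin> {..<v} \<longrightarrow> e x = 0)}"
      using e unfolding Rmonos_def by auto
  qed
  moreover have "finite {e. \<forall>x. (x \<in> {..<v} \<longrightarrow> e x \<in> {..n}) \<and> (x \<notin> {..<v} \<longrightarrow> e x = (0::nat))}"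
    by (rule finite_set_of_finite_funs) auto
  ultimately show ?thesis using finite_subset by blast
qed

lemma finite_Rcar: "finite (Rcar v n :: ((nat \<Rightarrow> nat) \<Rightarrow> 'a::{finite,field}) set)"
proof -
  have "Rcar v n = {f :: (nat \<Rightarrow> nat) \<Rightarrow> 'a. \<forall>x. (x \<in> Rmonos v n \<longrightarrow> f x \<in> UNIV) \<and> (x \<notin> Rmonos v n \<longrightarrow> f x = 0)}"
    unfolding Rcar_def by auto
  also have "finite \<dots>" by (rule finite_set_of_finite_funs) (auto simp: finite_Rmonos)
  finally show ?thesis .
qed

lemma grp_Rcar: "grp (Rcar v n)" unfolding grp_def Rcar_def by auto

lemma Rscale_Rcar: "f \<in> Rcar v n \<Longrightarrow> Rscale c f \<in> Rcar v n" unfolding Rcar_def Rscale_def by auto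

lemma vs_Rscale: "vector_space (Rscale :: 'a::field \<Rightarrow> _)"
  by unfold_locales (auto simp: Rscale_def fun_eq_iff algebra_simps)

lemma Rmult_Rcar: "Rmult v n f g \<in> Rcar v n" unfolding Rmult_def Rcar_def by auto

lemma zero_Rmonos: "n \<ge> 1 \<Longrightarrow> (\<lambda>_. 0) \<in> Rmonos v n" unfolding Rmonos_def by auto

lemma le_Rmonos: assumes "e \<in> Rmonos v n" "a \<le> e" shows "a \<in> Rmonos v n"
proof -
  have "\<And>i. a i \<le> e i" using assms(2) by (simp add: le_fun_def)
  then have "(\<Sum>i<v. a i) \<le> (\<Sum>i<v. e i)" by (intro sum_mono) auto
  moreover have "\<forall>i\<ge>v. a i = 0"
  proof (intro allI impI)
    fix i assume "v \<le> i"
    then have "e i = 0" using assms(1) unfolding Rmonos_def by simp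
    then show "a i = 0" using \<open>\<And>i. a i \<le> e i\<close>[of i] by simp
  qed
  ultimately show ?thesis using assms(1) unfolding Rmonos_def by simp
qed

lemma diff_Rmonos: "e \<in> Rmonos v n \<Longrightarrow> e - a \<in> Rmonos v n"
  by (rule le_Rmonos) (auto simp: le_fun_def)

lemma finite_below: "finite {a \<in> Rmonos v n. a \<le> e}" using finite_Rmonos by simp

lemma Rmult_comm: "Rmult v n f g = Rmult v n g f"
proof (rule ext)
  fix e
  show "Rmult v n f g e = Rmult v n g f e"
  proof (cases "e \<in> Rmonos v n")
    case False then show ?thesis unfolding Rmult_def by simp
  next
    case True
    have w: "\<And>a. a \<in> {a\<in>Rmonos v n. a \<le> e} \<Longrightarrow> e - (e - a) = a \<and> e - a \<in> {a\<in>Rmonos v n. a \<le> e}"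
    proof -
      fix a assume a: "a \<in> {a\<in>Rmonos v n. a \<le> e}"
      then have le: "a \<le> e" by simp
      have "e - (e - a) = a" using le by (auto simp: le_fun_def fun_eq_iff)
      moreover have "e - a \<in> {a\<in>Rmonos v n. a \<le> e}" using diff_Rmonos[OF True] by (auto simp: le_fun_def)
      ultimately show "e - (e - a) = a \<and> e - a \<in> {a\<in>Rmonos v n. a \<le> e}" by blast
    qed
    have "(\<Sum>a\<in>{a\<in>Rmonos v n. a \<le> e}. f a * g (e - a)) = (\<Sum>a\<in>{a\<in>Rmonos v n. a \<le> e}. g a * f (e - a))"
      apply (rule sum.reindex_bij_witness[where i = "\<lambda>a. e - a" and j = "\<lambda>a. e - a"])
      using w apply blast
      using w apply blast
      using w apply blast
      using w apply blast
      using w by (simp add: mult.commute)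
    then show ?thesis unfolding Rmult_def using True by simp
  qed
qed

lemma Rmult_scale: "Rmult v n (Rscale c f) g = Rscale c (Rmult v n f g)"
proof (rule ext)
  fix e show "Rmult v n (Rscale c f) g e = Rscale c (Rmult v n f g) e"
  proof (cases "e \<in> Rmonos v n")
    case True
    have "(\<Sum>a\<in>{a\<in>Rmonos v n. a \<le> e}. c * f a * g (e - a)) = c * (\<Sum>a\<in>{a\<in>Rmonos v n. a \<le> e}. f a * g (e - a))"
      by (simp add: sum_distrib_left mult.assoc)
    then show ?thesis using True unfolding Rmult_def Rscale_def by simp
  next
    case False then show ?thesis unfolding Rmult_def Rscale_def by simp
  qed
qed

lemma Rmult_scale2: "Rmult v n f (Rscale c g) = Rscale c (Rmult v n f g)"
  using Rmult_scale Rmult_comm by metis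

lemma Rmult_add: "Rmult v n (f1 + f2) g = Rmult v n f1 g + Rmult v n f2 g"
proof (rule ext)
  fix e show "Rmult v n (f1 + f2) g e = (Rmult v n f1 g + Rmult v n f2 g) e"
  proof (cases "e \<in> Rmonos v n")
    case True
    have "(\<Sum>a\<in>{a\<in>Rmonos v n. a \<le> e}. (f1 a + f2 a) * g (e - a)) = (\<Sum>a\<in>{a\<in>Rmonos v n. a \<le> e}. f1 a * g (e - a)) + (\<Sum>a\<in>{a\<in>Rmonos v n. a \<le> e}. f2 a * g (e - a))"
      by (simp add: sum.distrib distrib_right)
    then show ?thesis using True unfolding Rmult_def by simp
  next
    case False then show ?thesis unfolding Rmult_def by simp
  qed
qed

lemma Rmult_zero: "Rmult v n 0 g = 0"
proof (rule ext)
  fix e show "Rmult v n 0 g e = 0 e" unfolding Rmult_def zero_fun_def by simp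
qed

lemma Rmult_sum: "Rmult v n (\<Sum>a\<in>A. F a) g = (\<Sum>a\<in>A. Rmult v n (F a) g)"
proof (induction A rule: infinite_finite_induct)
  case (infinite A) then show ?case by (metis sum.infinite Rmult_zero)
next
  case empty then show ?case by (metis sum.empty Rmult_zero)
next
  case (insert x B) show ?case by (simp only: sum.insert[OF insert(1,2)] Rmult_add insert(3))
qed

lemma Rmult_one_scale:
  assumes "n \<ge> 1" "f \<in> Rcar v n"
  shows "Rmult v n (Rscale c Rone) f = Rscale c f"
proof (rule ext)
  fix e
  show "Rmult v n (Rscale c Rone) f e = Rscale c f e"
  proof (cases "e \<in> Rmonos v n")
    case False then show ?thesis using assms(2) unfolding Rmult_def Rscale_def Rcar_def by simp
  next
    case True
    have z: "e - (\<lambda>_. 0) = e" by (simp add: fun_eq_iff)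
    have "(\<Sum>a\<in>{a\<in>Rmonos v n. a \<le> e}. Rscale c Rone a * f (e - a))
        = (\<Sum>a\<in>{a\<in>Rmonos v n. a \<le> e}. if a = (\<lambda>_. 0) then c * f e else 0)"
      by (rule sum.cong) (use z in \<open>auto simp: Rscale_def Rone_def\<close>)
    also have "\<dots> = c * f e"
    proof -
      have "e - (\<lambda>_. 0) = e" by (simp add: fun_eq_iff)
      then show ?thesis using zero_Rmonos[OF assms(1)] finite_below
        by (simp add: sum.delta le_fun_def)
    qed
    finally show ?thesis using True unfolding Rmult_def Rscale_def by simp
  qed
qed

lemma Rmult_one: "n \<ge> 1 \<Longrightarrow> f \<in> Rcar v n \<Longrightarrow> Rmult v n Rone f = f"
  using Rmult_one_scale[of n f v 1] by (simp add: Rscale_def)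

lemma dlt_le: "dlt i \<le> e \<longleftrightarrow> 1 \<le> e i"
  unfolding dlt_def le_fun_def by auto

lemma dlt_Rmonos: assumes "e \<in> Rmonos v n" "i < v" "1 \<le> e i" shows "dlt i \<in> Rmonos v n"
  using le_Rmonos[OF assms(1)] dlt_le assms(3) by blast

lemma xvar_mult:
  assumes "i < v"
  shows "Rmult v n (xvar v n i) g = (\<lambda>e. if e \<in> Rmonos v n \<and> 1 \<le> e i then g (e - dlt i) else 0)"
proof (rule ext)
  fix e
  show "Rmult v n (xvar v n i) g e = (if e \<in> Rmonos v n \<and> 1 \<le> e i then g (e - dlt i) else 0)"
  proof (cases "e \<in> Rmonos v n")
    case False then show ?thesis unfolding Rmult_def by simp
  next
    case True
    have "(\<Sum>a\<in>{a\<in>Rmonos v n. a \<le> e}. xvar v n i a * g (e - a))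
        = (\<Sum>a\<in>{a\<in>Rmonos v n. a \<le> e}. if a = dlt i then g (e - a) else 0)"
      by (rule sum.cong) (auto simp: xvar_def dlt_def)
    also have "\<dots> = (if dlt i \<in> {a\<in>Rmonos v n. a \<le> e} then g (e - dlt i) else 0)"
      using finite_below by (simp add: sum.delta)
    also have "\<dots> = (if 1 \<le> e i then g (e - dlt i) else 0)"
      using dlt_Rmonos[OF True assms] dlt_le by auto
    finally show ?thesis using True unfolding Rmult_def by simp
  qed
qed

lemma mono_Rcar: "a \<in> Rmonos v n \<Longrightarrow> monoE a \<in> Rcar v n" unfolding monoE_def Rcar_def by auto

lemma xvar_Rcar: "xvar v n i \<in> Rcar v n" unfolding xvar_def Rcar_def by auto

lemma mono_x:
  assumes "a \<in> Rmonos v n" "i < v" "1 \<le> a i"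
  shows "(monoE a :: _ \<Rightarrow> 'a::field) = Rmult v n (xvar v n i) (monoE (a - dlt i))"
proof -
  have "\<And>e. (e \<in> Rmonos v n \<and> 1 \<le> e i \<and> e - dlt i = a - dlt i) \<longleftrightarrow> e = a"
  proof
    fix e assume h: "e \<in> Rmonos v n \<and> 1 \<le> e i \<and> e - dlt i = a - dlt i"
    show "e = a"
    proof
      fix j
      have "e j - dlt i j = a j - dlt i j" using h by (metis fun_diff_def)
      then show "e j = a j" using h assms(3) unfolding dlt_def by (cases "j = i") auto
    qed
  qed (use assms in auto)
  then show ?thesis unfolding xvar_mult[OF assms(2)] monoE_def by (auto simp: fun_eq_iff)
qed

lemma Rcar_expand:
  assumes "r \<in> Rcar v n"
  shows "r = (\<Sum>a\<in>Rmonos v n. Rscale (r a) (monoE a))"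
proof (rule ext)
  fix e
  have "(\<Sum>a\<in>Rmonos v n. Rscale (r a) (monoE a)) e = (\<Sum>a\<in>Rmonos v n. if a = e then r e else 0)"
    unfolding sum_fun_apply by (rule sum.cong) (auto simp: Rscale_def monoE_def)
  also have "\<dots> = r e" using finite_Rmonos assms unfolding Rcar_def by (auto simp: sum.delta')
  finally show "r e = (\<Sum>a\<in>Rmonos v n. Rscale (r a) (monoE a)) e" by simp
qed


lemma trans3: "a = b \<Longrightarrow> b = c \<Longrightarrow> c = d \<Longrightarrow> a = d" by simp

lemma eq_diff_helper: "x = a + b \<Longrightarrow> x - a = (b::'b::ab_group_add)" by simp

lemma Rone_Rcar: "n \<ge> 1 \<Longrightarrow> Rone \<in> Rcar v n"
  unfolding Rone_def Rcar_def using zero_Rmonos by auto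

lemma mono0: "monoE (\<lambda>_. 0) = Rone" unfolding monoE_def Rone_def by simp

lemma Rmult_add2: "Rmult v n g (f1 + f2) = Rmult v n g f1 + Rmult v n g f2"
  using Rmult_add Rmult_comm by metis

lemma zero_fun_lam: "(\<lambda>_. 0::'a::zero) = 0" by (simp add: fun_eq_iff)

lemma add_monoid_inv:
  fixes x :: "(nat \<Rightarrow> nat) \<Rightarrow> 'a::field"
  assumes r: "ring (Rring v n :: ((nat \<Rightarrow> nat) \<Rightarrow> 'a) ring)" and x: "x \<in> Rcar v n"
  shows "inv\<^bsub>add_monoid (Rring v n)\<^esub> x = - x"
proof -
  interpret R: ring "Rring v n :: ((nat \<Rightarrow> nat) \<Rightarrow> 'a) ring" by (rule r)
  have g: "group (add_monoid (Rring v n :: ((nat \<Rightarrow> nat) \<Rightarrow> 'a) ring))" by (rule R.a_group)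
  have "-x \<in> Rcar v n" using x grp_Rcar grp_neg by blast
  moreover have "(- x) \<otimes>\<^bsub>add_monoid (Rring v n)\<^esub> x = \<one>\<^bsub>add_monoid (Rring v n)\<^esub>"
    by (simp add: Rring_def zero_fun_lam)
  ultimately show ?thesis using group.inv_equality[OF g] x by (simp add: Rring_def)
qed

locale ctx =
  fixes v n :: nat and I :: "((nat \<Rightarrow> nat) \<Rightarrow> 'a::{finite,field}) set"
  assumes n1: "n \<ge> 1" and idl: "ideal I (Rring v n)"
begin

abbreviation R :: "((nat \<Rightarrow> nat) \<Rightarrow> 'a) ring" where "R \<equiv> Rring v n"
abbreviation V :: "((nat \<Rightarrow> nat) \<Rightarrow> 'a) set" where "V \<equiv> Rcar v n"

lemma rng: "ring R" using idl unfolding ideal_def by blast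

lemma I_sub: "I \<subseteq> Rcar v n"
  using additive_subgroup.a_subset[of I "Rring v n"] idl unfolding ideal_def by (simp add: Rring_def)

lemma I_zero: "0 \<in> I"
proof -
  have "\<zero>\<^bsub>R\<^esub> \<in> I" using additive_subgroup.zero_closed[of I R] idl unfolding ideal_def by blast
  moreover have "\<zero>\<^bsub>R\<^esub> = 0" by (simp add: Rring_def fun_eq_iff)
  ultimately show ?thesis by simp
qed

lemma I_add: "x \<in> I \<Longrightarrow> y \<in> I \<Longrightarrow> x + y \<in> I"
  using additive_subgroup.a_closed[of I "Rring v n" x y] idl unfolding ideal_def by (simp add: Rring_def)

lemma I_lmult: "x \<in> I \<Longrightarrow> r \<in> Rcar v n \<Longrightarrow> Rmult v n r x \<in> I"
  using ideal.I_l_closed[OF idl, of x r] by (simp add: Rring_def)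

lemma I_scale: "x \<in> I \<Longrightarrow> Rscale c x \<in> I"
proof -
  assume x: "x \<in> I"
  have o: "Rscale c Rone \<in> V" using Rscale_Rcar[OF Rone_Rcar[OF n1]] .
  have "Rmult v n (Rscale c Rone) x = Rscale c x" using Rmult_one_scale[OF n1, of x v c] I_sub x by blast
  then show ?thesis using I_lmult[OF x o] by simp
qed

lemma I_neg: "x \<in> I \<Longrightarrow> - x \<in> I"
proof -
  assume "x \<in> I"
  then have "Rscale (-1) x \<in> I" by (rule I_scale)
  moreover have "Rscale (-1) x = - x" by (simp add: Rscale_def fun_eq_iff)
  ultimately show "- x \<in> I" by simp
qed

lemma grp_I: "grp I" unfolding grp_def using I_zero I_add I_neg by blast

lemma I_sum: "finite A \<Longrightarrow> (\<And>a. a \<in> A \<Longrightarrow> F a \<in> I) \<Longrightarrow> sum F A \<in> I"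
proof (induction A rule: finite_induct)
  case empty then show ?case by (simp only: sum.empty I_zero)
next
  case (insert x B)
  have "F x \<in> I" "sum F B \<in> I" using insert by auto
  then show ?case using I_add sum.insert[OF insert(1,2)] by metis
qed

lemma assoc: "r \<in> V \<Longrightarrow> s \<in> Rcar v n \<Longrightarrow> t \<in> Rcar v n \<Longrightarrow>
   Rmult v n (Rmult v n r s) t = Rmult v n r (Rmult v n s t)"
proof -
  assume a: "r \<in> Rcar v n" "s \<in> Rcar v n" "t \<in> Rcar v n"
  interpret R: ring R by (rule rng)
  show ?thesis using R.m_assoc[of r s t] a by (simp add: Rring_def)
qed

abbreviation "S \<equiv> soc_pre v n I"

lemma I_S: "I \<subseteq> S"
  unfolding soc_pre_def using I_sub I_lmult xvar_Rcar by blast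

lemma S_sub: "S \<subseteq> Rcar v n" unfolding soc_pre_def by blast

lemma S_add: "x \<in> S \<Longrightarrow> y \<in> S \<Longrightarrow> x + y \<in> S"
  unfolding soc_pre_def using grp_add[OF grp_Rcar] I_add by (auto simp: Rmult_add2)

lemma S_scale: "x \<in> S \<Longrightarrow> Rscale c x \<in> S"
  unfolding soc_pre_def using Rscale_Rcar I_scale by (auto simp: Rmult_scale2)

lemma S_zero: "0 \<in> S"
proof -
  have "Rscale 0 (0::(nat \<Rightarrow> nat) \<Rightarrow> 'a) = 0" by (simp add: Rscale_def fun_eq_iff)
  moreover have "(0::(nat \<Rightarrow> nat) \<Rightarrow> 'a) \<in> S" using I_S I_zero by blast
  ultimately show ?thesis by simp
qed

lemma S_neg: "x \<in> S \<Longrightarrow> - x \<in> S"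
proof -
  assume "x \<in> S"
  then have "Rscale (-1) x \<in> S" by (rule S_scale)
  moreover have "Rscale (-1) x = - x" by (simp add: Rscale_def fun_eq_iff)
  ultimately show "- x \<in> S" by simp
qed

lemma grp_S: "grp S" unfolding grp_def using S_zero S_add S_neg by blast

lemma mono_in_I:
  assumes f: "f \<in> S" and a: "a \<in> Rmonos v n" "a \<noteq> (\<lambda>_. 0)"
  shows "Rmult v n (monoE a) f \<in> I"
proof -
  obtain i where i: "i < v" "1 \<le> a i"
  proof -
    have "\<exists>i<v. 1 \<le> a i"
    proof (rule ccontr)
      assume h: "\<not> (\<exists>i<v. 1 \<le> a i)"
      have "a = (\<lambda>_. 0)"
      proof
        fix i show "a i = 0"
        proof (cases "i < v")
          case True then show ?thesis using h by auto
        next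
          case False then show ?thesis using a(1) unfolding Rmonos_def by auto
        qed
      qed
      then show False using a(2) by blast
    qed
    then show ?thesis using that by blast
  qed
  let ?b = "a - dlt i"
  have b: "?b \<in> Rmonos v n" using diff_Rmonos[OF a(1)] .
  have fc: "f \<in> Rcar v n" using f S_sub by blast
  have "(monoE a :: (nat \<Rightarrow> nat) \<Rightarrow> 'a) = Rmult v n (xvar v n i) (monoE ?b)" by (rule mono_x[OF a(1) i])
  also have "\<dots> = Rmult v n (monoE ?b) (xvar v n i)" by (rule Rmult_comm)
  finally have "Rmult v n (monoE a) f = Rmult v n (monoE ?b) (Rmult v n (xvar v n i) f)"
    using assoc[OF mono_Rcar[OF b] xvar_Rcar[of v n i] fc] by simp
  moreover have "Rmult v n (xvar v n i) f \<in> I" using f i(1) unfolding soc_pre_def by blast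
  ultimately show ?thesis using I_lmult mono_Rcar[OF b] by simp
qed

lemma mult_S:
  assumes f: "f \<in> S" and r: "r \<in> Rcar v n"
  shows "Rmult v n r f - Rscale (r (\<lambda>_. 0)) f \<in> I"
proof -
  let ?M = "Rmonos v n"
  have fc: "f \<in> Rcar v n" using f S_sub by blast
  have e1: "Rmult v n r f = (\<Sum>a\<in>?M. Rmult v n (Rscale (r a) (monoE a)) f)"
    using Rcar_expand[OF r] Rmult_sum by metis
  have e2: "(\<Sum>a\<in>?M. Rmult v n (Rscale (r a) (monoE a)) f) = (\<Sum>a\<in>?M. Rscale (r a) (Rmult v n (monoE a) f))"
    by (simp only: Rmult_scale)
  have e3: "(\<Sum>a\<in>?M. Rscale (r a) (Rmult v n (monoE a) f)) = Rscale (r (\<lambda>_. 0)) (Rmult v n (monoE (\<lambda>_. 0)) f) + (\<Sum>a\<in>?M - {\<lambda>_. 0}. Rscale (r a) (Rmult v n (monoE a) f))"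
    by (rule sum.remove[OF finite_Rmonos zero_Rmonos[OF n1]])
  have e4: "Rscale (r (\<lambda>_. 0)) (Rmult v n (monoE (\<lambda>_. 0)) f) = Rscale (r (\<lambda>_. 0)) f"
    using Rmult_one[OF n1 fc] by (simp add: mono0)
  have "Rmult v n r f = Rscale (r (\<lambda>_. 0)) (Rmult v n (monoE (\<lambda>_. 0)) f) + (\<Sum>a\<in>?M - {\<lambda>_. 0}. Rscale (r a) (Rmult v n (monoE a) f))"
    using e1 e2 e3 by (rule trans3)
  then have "Rmult v n r f = Rscale (r (\<lambda>_. 0)) f + (\<Sum>a\<in>?M - {\<lambda>_. 0}. Rscale (r a) (Rmult v n (monoE a) f))"
    unfolding e4 .
  then have "Rmult v n r f - Rscale (r (\<lambda>_. 0)) f = (\<Sum>a\<in>?M - {\<lambda>_. 0}. Rscale (r a) (Rmult v n (monoE a) f))"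
    by (rule eq_diff_helper)
  moreover have "(\<Sum>a\<in>?M - {\<lambda>_. 0}. Rscale (r a) (Rmult v n (monoE a) f)) \<in> I"
  proof (rule I_sum)
    show "finite (?M - {\<lambda>_. 0})" using finite_Rmonos by blast
  next
    fix a assume "a \<in> ?M - {\<lambda>_. 0}"
    then have "a \<in> ?M" "a \<noteq> (\<lambda>_. 0)" by auto
    then show "Rscale (r a) (Rmult v n (monoE a) f) \<in> I" using I_scale mono_in_I[OF f] by blast
  qed
  ultimately show ?thesis by simp
qed

end


context ctx begin

lemma J_ideal:
  assumes f: "f \<in> S"
  shows "ideal {i + Rscale c f | i c. i \<in> I} R"
proof -
  let ?J = "{i + Rscale c f | i c. i \<in> I}"
  interpret RR: ring R by (rule rng)
  have fV: "f \<in> V" using f S_sub by blast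
  have JV: "?J \<subseteq> V"
  proof
    fix x assume "x \<in> ?J"
    then obtain i c where "i \<in> I" "x = i + Rscale c f" by blast
    then show "x \<in> V" using I_sub grp_add[OF grp_Rcar] Rscale_Rcar[OF fV] by blast
  qed
  have Jadd: "x \<in> ?J \<Longrightarrow> y \<in> ?J \<Longrightarrow> x + y \<in> ?J" for x y
  proof -
    assume "x \<in> ?J" "y \<in> ?J"
    then obtain i1 c1 i2 c2 where r: "i1 \<in> I" "x = i1 + Rscale c1 f" "i2 \<in> I" "y = i2 + Rscale c2 f" by blast
    have "x + y = (i1 + i2) + Rscale (c1 + c2) f" using r by (simp add: fun_eq_iff Rscale_def algebra_simps)
    moreover have "i1 + i2 \<in> I" using I_add r by blast
    ultimately show "x + y \<in> ?J" by blast
  qed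
  have Jneg: "x \<in> ?J \<Longrightarrow> - x \<in> ?J" for x
  proof -
    assume "x \<in> ?J"
    then obtain i c where r: "i \<in> I" "x = i + Rscale c f" by blast
    have "- x = (- i) + Rscale (- c) f" using r by (simp add: fun_eq_iff Rscale_def algebra_simps)
    moreover have "- i \<in> I" using I_neg r by blast
    ultimately show "- x \<in> ?J" by blast
  qed
  have Jl: "Rmult v n x a \<in> ?J" if a: "a \<in> ?J" and x: "x \<in> V" for a x
  proof -
    obtain i c where r: "i \<in> I" "a = i + Rscale c f" using a by blast
    define j where "j = Rmult v n x f - Rscale (x (\<lambda>_. 0)) f"
    have j: "j \<in> I" unfolding j_def by (rule mult_S[OF f x])
    have "Rmult v n x a = Rmult v n x i + Rscale c (Rmult v n x f)"
      using r by (simp add: Rmult_add2 Rmult_scale2)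
    also have "\<dots> = (Rmult v n x i + Rscale c j) + Rscale (c * x (\<lambda>_. 0)) f"
      unfolding j_def by (simp add: fun_eq_iff Rscale_def algebra_simps)
    finally have eq: "Rmult v n x a = (Rmult v n x i + Rscale c j) + Rscale (c * x (\<lambda>_. 0)) f" .
    have "Rmult v n x i + Rscale c j \<in> I" using I_add I_lmult[OF r(1) x] I_scale[OF j] by blast
    then show ?thesis unfolding eq by blast
  qed
  show ?thesis
  proof (rule idealI)
    show "ring R" by (rule rng)
  next
    have g: "group (add_monoid R)" by (rule RR.a_group)
    show "subgroup ?J (add_monoid R)"
    proof (rule group.subgroupI[OF g])
      show "?J \<subseteq> carrier (add_monoid R)" using JV by (simp add: Rring_def)
    next
      have "0 + Rscale 0 f \<in> ?J" using I_zero by blast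
      then show "?J \<noteq> {}" by blast
    next
      fix a assume a: "a \<in> ?J"
      then have "inv\<^bsub>add_monoid R\<^esub> a = - a" using add_monoid_inv[OF rng] JV by blast
      then show "inv\<^bsub>add_monoid R\<^esub> a \<in> ?J" using Jneg[OF a] by simp
    next
      fix a b assume "a \<in> ?J" "b \<in> ?J"
      then show "a \<otimes>\<^bsub>add_monoid R\<^esub> b \<in> ?J" using Jadd by (simp add: Rring_def)
    qed
  next
    fix a x assume "a \<in> ?J" "x \<in> carrier R"
    then show "x \<otimes>\<^bsub>R\<^esub> a \<in> ?J" using Jl by (simp add: Rring_def)
  next
    fix a x assume ax: "a \<in> ?J" "x \<in> carrier R"
    have "Rmult v n a x = Rmult v n x a" by (rule Rmult_comm)
    then show "a \<otimes>\<^bsub>R\<^esub> x \<in> ?J" using Jl[OF ax(1)] ax(2) by (simp add: Rring_def)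
  qed
qed

definition vanish :: "nat \<Rightarrow> ((nat \<Rightarrow> nat) \<Rightarrow> 'a) \<Rightarrow> bool" where
  "vanish d g \<longleftrightarrow> (\<forall>e. (\<Sum>i<v. e i) < d \<longrightarrow> g e = 0)"

lemma sum_minus_dlt:
  assumes "i < v" "1 \<le> e i"
  shows "(\<Sum>j<v. (e - dlt i) j) + 1 = (\<Sum>j<v. e j)"
proof -
  have "(\<Sum>j<v. e j) = (\<Sum>j<v. (e - dlt i) j + dlt i j)"
    by (rule sum.cong) (use assms(2) in \<open>auto simp: dlt_def\<close>)
  also have "\<dots> = (\<Sum>j<v. (e - dlt i) j) + (\<Sum>j<v. dlt i j)" by (rule sum.distrib)
  also have "(\<Sum>j<v. dlt i j) = 1" using assms(1) unfolding dlt_def by (simp add: sum.delta)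
  finally show ?thesis by simp
qed

lemma vanish_step:
  assumes "vanish d g" "i < v"
  shows "vanish (Suc d) (Rmult v n (xvar v n i) g)"
  unfolding vanish_def
proof (intro allI impI)
  fix e assume e: "(\<Sum>i<v. e i) < Suc d"
  show "Rmult v n (xvar v n i) g e = 0"
  proof (cases "e \<in> Rmonos v n \<and> 1 \<le> e i")
    case True
    then have "(\<Sum>j<v. (e - dlt i) j) < d" using sum_minus_dlt[OF assms(2)] e by force
    then have "g (e - dlt i) = 0" using assms(1) unfolding vanish_def by blast
    then show ?thesis using True unfolding xvar_mult[OF assms(2)] by simp
  next
    case False then show ?thesis unfolding xvar_mult[OF assms(2)] by auto
  qed
qed

lemma vanish_n: assumes "g \<in> V" "vanish n g" shows "g = 0"
proof
  fix e show "g e = 0 e"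
  proof (cases "e \<in> Rmonos v n")
    case True then show ?thesis using assms(2) unfolding vanish_def Rmonos_def by simp
  next
    case False then show ?thesis using assms(1) unfolding Rcar_def by simp
  qed
qed

lemma vanish_mono: "d' \<le> d \<Longrightarrow> vanish d g \<Longrightarrow> vanish d' g"
  unfolding vanish_def by auto

lemma socle_extract:
  assumes J: "ideal J R" and g: "g \<in> J" "g \<notin> I"
  shows "\<exists>f\<in>J. f \<in> S \<and> f \<notin> I"
proof -
  have JV: "J \<subseteq> V" using additive_subgroup.a_subset[of J R] J unfolding ideal_def by (simp add: Rring_def)
  have Jx: "Rmult v n (xvar v n i) h \<in> J" if "h \<in> J" for i h
  proof -
    have "xvar v n i \<in> V" by (rule xvar_Rcar)
    then show ?thesis using ideal.I_l_closed[OF J that, of "xvar v n i"] by (simp add: Rring_def)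
  qed
  have main: "\<forall>h. vanish (n - k) h \<longrightarrow> h \<in> J \<longrightarrow> h \<notin> I \<longrightarrow> (\<exists>f\<in>J. f \<in> S \<and> f \<notin> I)" for k
  proof (induction k)
    case 0
    show ?case
    proof (intro allI impI)
      fix h assume h: "vanish (n - 0) h" "h \<in> J" "h \<notin> I"
      then have "h = 0" using vanish_n JV by auto
      then show "\<exists>f\<in>J. f \<in> S \<and> f \<notin> I" using h(3) I_zero by simp
    qed
  next
    case (Suc k)
    show ?case
    proof (intro allI impI)
      fix h assume h: "vanish (n - Suc k) h" "h \<in> J" "h \<notin> I"
      show "\<exists>f\<in>J. f \<in> S \<and> f \<notin> I"
      proof (cases "h \<in> S")
        case True then show ?thesis using h by blast
      next
        case False
        then obtain i where i: "i < v" "Rmult v n (xvar v n i) h \<notin> I"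
          using h(2) JV unfolding soc_pre_def by blast
        have "vanish (Suc (n - Suc k)) (Rmult v n (xvar v n i) h)" by (rule vanish_step[OF h(1) i(1)])
        then have "vanish (n - k) (Rmult v n (xvar v n i) h)" by (rule vanish_mono[rotated]) simp
        then show ?thesis using Suc.IH Jx[OF h(2)] i(2) by blast
      qed
    qed
  qed
  have "vanish (n - n) g" unfolding vanish_def by simp
  then show ?thesis using main[of n] g by blast
qed

lemma maxcond_iff:
  assumes psi: "chr V \<psi>" and triv: "\<forall>x\<in>I. \<psi> x = 1"
  shows "(\<forall>J. ideal J R \<and> J \<subseteq> char_ker v n \<psi> \<longrightarrow> J \<subseteq> I) \<longleftrightarrow>
         (\<forall>f\<in>S. (\<forall>c. \<psi> (Rscale c f) = 1) \<longrightarrow> f \<in> I)"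
proof
  assume H: "\<forall>J. ideal J R \<and> J \<subseteq> char_ker v n \<psi> \<longrightarrow> J \<subseteq> I"
  show "\<forall>f\<in>S. (\<forall>c. \<psi> (Rscale c f) = 1) \<longrightarrow> f \<in> I"
  proof (intro ballI impI)
    fix f assume f: "f \<in> S" and c: "\<forall>c. \<psi> (Rscale c f) = 1"
    let ?J = "{i + Rscale c f | i c. i \<in> I}"
    have fV: "f \<in> V" using f S_sub by blast
    have "?J \<subseteq> char_ker v n \<psi>"
    proof
      fix x assume "x \<in> ?J"
      then obtain i c' where r: "i \<in> I" "x = i + Rscale c' f" by blast
      have iV: "i \<in> V" using r(1) I_sub by blast
      have sV: "Rscale c' f \<in> V" using Rscale_Rcar[OF fV] .
      have "\<psi> x = \<psi> i * \<psi> (Rscale c' f)" using chr_add[OF psi iV sV] r(2) by simp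
      then have "\<psi> x = 1" using triv r(1) c by simp
      moreover have "x \<in> V" using r(2) iV sV grp_add[OF grp_Rcar] by simp
      ultimately show "x \<in> char_ker v n \<psi>" unfolding char_ker_def by simp
    qed
    then have "?J \<subseteq> I" using H J_ideal[OF f] by blast
    moreover have "f \<in> ?J"
    proof -
      have "f = 0 + Rscale 1 f" by (simp add: Rscale_def fun_eq_iff)
      then show ?thesis using I_zero by blast
    qed
    ultimately show "f \<in> I" by blast
  qed
next
  assume H: "\<forall>f\<in>S. (\<forall>c. \<psi> (Rscale c f) = 1) \<longrightarrow> f \<in> I"
  show "\<forall>J. ideal J R \<and> J \<subseteq> char_ker v n \<psi> \<longrightarrow> J \<subseteq> I"
  proof (intro allI impI)
    fix J assume J: "ideal J R \<and> J \<subseteq> char_ker v n \<psi>"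
    show "J \<subseteq> I"
    proof (rule ccontr)
      assume "\<not> J \<subseteq> I"
      then obtain g where "g \<in> J" "g \<notin> I" by blast
      then obtain f where f: "f \<in> J" "f \<in> S" "f \<notin> I" using socle_extract J by blast
      have fV: "f \<in> V" using f(2) S_sub by blast
      have "\<forall>c. \<psi> (Rscale c f) = 1"
      proof
        fix c
        have o: "Rscale c Rone \<in> V" using Rscale_Rcar[OF Rone_Rcar[OF n1]] .
        have "Rmult v n (Rscale c Rone) f \<in> J"
          using ideal.I_l_closed[of J R f "Rscale c Rone"] J f(1) o by (simp add: Rring_def)
        then have "Rscale c f \<in> J" using Rmult_one_scale[OF n1 fV] by simp
        then show "\<psi> (Rscale c f) = 1" using J unfolding char_ker_def by blast
      qed
      then show False using H f by blast
    qed
  qed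
qed

end


lemma mod_Rscale: "module (Rscale :: 'a::field \<Rightarrow> _)"
  by unfold_locales (auto simp: Rscale_def fun_eq_iff algebra_simps)

lemma card_UNIV_ge2: "2 \<le> card (UNIV :: 'a::{finite,field} set)"
proof -
  have "{0, 1} \<subseteq> (UNIV :: 'a set)" by simp
  then have "card {0, 1::'a} \<le> card (UNIV :: 'a set)" by (rule card_mono[OF finite_UNIV])
  then show ?thesis by simp
qed

lemma char_count: "finite {\<chi>. chr (UNIV :: 'a::{finite,field} set) \<chi>} \<and> card {\<chi>. chr (UNIV :: 'a set) \<chi>} = card (UNIV :: 'a set)"
proof -
  have g: "grp (UNIV :: 'a set)" unfolding grp_def by simp
  have g0: "grp {0 :: 'a}" unfolding grp_def by simp
  have "{\<chi>. chr (UNIV :: 'a set) \<chi> \<and> (\<forall>x\<in>{0}. \<chi> x = 1)} = {\<chi>. chr (UNIV :: 'a set) \<chi>}"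
    using chr_zero[OF _ g] by auto
  then show ?thesis using triv_count[OF finite_UNIV g g0] by simp
qed

context ctx begin

lemma sub_I: "module.subspace Rscale I"
  unfolding module.subspace_def[OF mod_Rscale] using I_zero I_add I_scale by blast

lemma sub_S: "module.subspace Rscale S"
  unfolding module.subspace_def[OF mod_Rscale] using S_zero S_add S_scale by blast

lemma finI: "finite I" using I_sub finite_Rcar finite_subset by blast
lemma finS: "finite S" using S_sub finite_Rcar finite_subset by blast

lemma card_I: "card I = card (UNIV :: 'a set) ^ vector_space.dim Rscale I"
  by (rule vector_space.card_subspace_fin[OF vs_Rscale finI sub_I finite_UNIV])
lemma card_S: "card S = card (UNIV :: 'a set) ^ vector_space.dim Rscale S"
  by (rule vector_space.card_subspace_fin[OF vs_Rscale finS sub_S finite_UNIV])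

lemma cardI_pos: "0 < card I" using finI I_zero card_gt_0_iff by blast

definition line :: "((nat \<Rightarrow> nat) \<Rightarrow> 'a) \<Rightarrow> ((nat \<Rightarrow> nat) \<Rightarrow> 'a) set" where
  "line f0 = {i + Rscale c f0 | i c. i \<in> I}"

lemma line_props:
  assumes f0: "f0 \<in> V" "f0 \<notin> I"
  shows "card (line f0) = card I * card (UNIV :: 'a set)" "grp (line f0)" "I \<subseteq> line f0" "line f0 \<subseteq> V"
proof -
  have img: "line f0 = (\<lambda>(i, c). i + Rscale c f0) ` (I \<times> UNIV)" unfolding line_def by auto
  have inj: "inj_on (\<lambda>(i, c). i + Rscale c f0) (I \<times> UNIV)"
  proof (rule inj_onI, clarify)
    fix i c i' c' assume i: "i \<in> I" "i' \<in> I" and eq: "i + Rscale c f0 = i' + Rscale c' f0"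
    show "i = i' \<and> c = c'"
    proof (cases "c = c'")
      case True then show ?thesis using eq by simp
    next
      case False
      have pt: "\<forall>x. i' x - i x = (c - c') * f0 x" using eq by (simp add: fun_eq_iff Rscale_def algebra_simps)
      have nz: "c - c' \<noteq> 0" using False by simp
      have "Rscale (inverse (c - c')) (i' - i) = f0"
      proof
        fix x
        have "Rscale (inverse (c - c')) (i' - i) x = inverse (c - c') * ((c - c') * f0 x)"
          using pt unfolding Rscale_def by simp
        also have "\<dots> = f0 x" using nz by simp
        finally show "Rscale (inverse (c - c')) (i' - i) x = f0 x" .
      qed
      moreover have "i' - i \<in> I" using grp_diff[OF grp_I i(2,1)] .
      ultimately have "f0 \<in> I" using I_scale by metis
      then show ?thesis using f0 by simp
    qed
  qed
  show "card (line f0) = card I * card (UNIV :: 'a set)"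
    using card_image[OF inj] img by (simp add: card_cartesian_product)
  show "grp (line f0)" unfolding grp_def
  proof (intro conjI ballI)
    have "(0::(nat\<Rightarrow>nat)\<Rightarrow>'a) = 0 + Rscale 0 f0" by (simp add: fun_eq_iff Rscale_def)
    then show "0 \<in> line f0" unfolding line_def using I_zero by blast
  next
    fix x y assume "x \<in> line f0" "y \<in> line f0"
    then obtain i1 c1 i2 c2 where r: "i1 \<in> I" "x = i1 + Rscale c1 f0" "i2 \<in> I" "y = i2 + Rscale c2 f0"
      unfolding line_def by blast
    have "x + y = (i1 + i2) + Rscale (c1 + c2) f0" using r by (simp add: fun_eq_iff Rscale_def algebra_simps)
    then show "x + y \<in> line f0" unfolding line_def using I_add r by blast
  next
    fix x assume "x \<in> line f0"
    then obtain i c where r: "i \<in> I" "x = i + Rscale c f0" unfolding line_def by blast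
    have "- x = (- i) + Rscale (- c) f0" using r by (simp add: fun_eq_iff Rscale_def algebra_simps)
    then show "- x \<in> line f0" unfolding line_def using I_neg r by blast
  qed
  show "I \<subseteq> line f0"
  proof
    fix i assume "i \<in> I"
    moreover have "i = i + Rscale 0 f0" by (simp add: fun_eq_iff Rscale_def)
    ultimately show "i \<in> line f0" unfolding line_def by blast
  qed
  show "line f0 \<subseteq> V"
  proof
    fix x assume "x \<in> line f0"
    then obtain i c where r: "i \<in> I" "x = i + Rscale c f0" unfolding line_def by blast
    then show "x \<in> V" using I_sub grp_add[OF grp_Rcar] Rscale_Rcar[OF f0(1)] by blast
  qed
qed

end


context ctx begin


definition socc :: "(((nat \<Rightarrow> nat) \<Rightarrow> 'a) \<Rightarrow> complex) \<Rightarrow> bool" where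
  "socc \<psi> \<longleftrightarrow> (\<forall>f\<in>S. (\<forall>c. \<psi> (Rscale c f) = 1) \<longrightarrow> f \<in> I)"

abbreviation "A \<equiv> {\<psi>. chr V \<psi> \<and> (\<forall>x\<in>I. \<psi> x = 1)}"

lemma T_eq:
  "{\<psi>. add_char v n \<psi> \<and> I \<subseteq> char_ker v n \<psi> \<and>
        (\<forall>J. ideal J (Rring v n) \<and> J \<subseteq> char_ker v n \<psi> \<longrightarrow> J \<subseteq> I)} = {\<psi>. \<psi> \<in> A \<and> socc \<psi>}"
proof -
  have ac: "add_char v n \<psi> \<longleftrightarrow> chr V \<psi>" for \<psi> :: "((nat \<Rightarrow> nat) \<Rightarrow> 'a) \<Rightarrow> complex"
    unfolding add_char_def chr_def by simp
  have kk: "I \<subseteq> char_ker v n \<psi> \<longleftrightarrow> (\<forall>x\<in>I. \<psi> x = 1)" for \<psi> :: "((nat \<Rightarrow> nat) \<Rightarrow> 'a) \<Rightarrow> complex"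
    unfolding char_ker_def using I_sub by blast
  show ?thesis using maxcond_iff unfolding socc_def ac kk by blast
qed

lemma A_count: "finite A \<and> card A * card I = card V"
  using triv_count[OF finite_Rcar grp_Rcar grp_I I_sub] .

lemma dims:
  "vector_space.dim Rscale I \<le> vector_space.dim Rscale S"
  "card S = card (UNIV :: 'a set) ^ (vector_space.dim Rscale S - vector_space.dim Rscale I) * card I"
proof -
  have q2: "2 \<le> card (UNIV :: 'a set)" by (rule card_UNIV_ge2)
  have "card I \<le> card S" using card_mono[OF finS I_S] .
  then have "card (UNIV :: 'a set) ^ vector_space.dim Rscale I \<le> card (UNIV :: 'a set) ^ vector_space.dim Rscale S" using card_I card_S by simp
  then show le: "vector_space.dim Rscale I \<le> vector_space.dim Rscale S"
    using q2 by (simp add: power_increasing_iff)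
  show "card S = card (UNIV :: 'a set) ^ (vector_space.dim Rscale S - vector_space.dim Rscale I) * card I"
    using card_I card_S le by (simp add: power_add[symmetric])
qed

lemma case0:
  assumes "socle_dim v n I = 0"
  shows "{\<psi>. \<psi> \<in> A \<and> socc \<psi>} = A"
proof -
  have "card S = card I" using dims assms unfolding socle_dim_def by simp
  then have "I = S" using card_subset_eq[OF finS I_S] by simp
  then show ?thesis unfolding socc_def by auto
qed

lemma case1:
  assumes "socle_dim v n I = 1"
  shows "real (card {\<psi>. \<psi> \<in> A \<and> socc \<psi>}) = real (card V) / real (card I) * (1 - 1 / real (card (UNIV :: 'a set)))"
proof -
  have cS: "card S = card (UNIV :: 'a set) * card I" using dims assms unfolding socle_dim_def by simp
  have q2: "2 \<le> card (UNIV :: 'a set)" by (rule card_UNIV_ge2)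
  have "card I < card S" using cS q2 cardI_pos by simp
  then have "I \<noteq> S" by auto
  then obtain f0 where f0: "f0 \<in> S" "f0 \<notin> I" using I_S by blast
  have f0V: "f0 \<in> V" using f0 S_sub by blast
  note L = line_props[OF f0V f0(2)]
  have LS: "line f0 \<subseteq> S"
  proof
    fix x assume "x \<in> line f0"
    then obtain i c where r: "i \<in> I" "x = i + Rscale c f0" unfolding line_def by blast
    then show "x \<in> S" using S_add I_S S_scale[OF f0(1)] by blast
  qed
  have LeqS: "line f0 = S" using card_subset_eq[OF finS LS] L(1) cS by (simp add: mult.commute)
  let ?B = "{\<psi>. chr V \<psi> \<and> (\<forall>x\<in>line f0. \<psi> x = 1)}"
  have B_count: "finite ?B \<and> card ?B * card (line f0) = card V"
    using triv_count[OF finite_Rcar grp_Rcar L(2) L(4)] .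
  have BA: "?B \<subseteq> A" using L(3) by blast
  have inB: "\<psi> \<in> ?B \<longleftrightarrow> (\<forall>c. \<psi> (Rscale c f0) = 1)" if \<psi>: "\<psi> \<in> A" for \<psi>
  proof
    assume "\<psi> \<in> ?B"
    moreover have "Rscale c f0 \<in> line f0" for c
    proof -
      have "Rscale c f0 = 0 + Rscale c f0" by simp
      then show ?thesis unfolding line_def using I_zero by blast
    qed
    ultimately show "\<forall>c. \<psi> (Rscale c f0) = 1" by blast
  next
    assume c: "\<forall>c. \<psi> (Rscale c f0) = 1"
    have "\<forall>x\<in>line f0. \<psi> x = 1"
    proof
      fix x assume "x \<in> line f0"
      then obtain i c' where r: "i \<in> I" "x = i + Rscale c' f0" unfolding line_def by blast
      have "\<psi> x = \<psi> i * \<psi> (Rscale c' f0)" using chr_add[of V \<psi> i "Rscale c' f0"] \<psi> r I_sub Rscale_Rcar[OF f0V] by auto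
      then show "\<psi> x = 1" using \<psi> r c by simp
    qed
    then show "\<psi> \<in> ?B" using \<psi> by simp
  qed
  have socc_iff: "socc \<psi> \<longleftrightarrow> \<psi> \<notin> ?B" if \<psi>: "\<psi> \<in> A" for \<psi>
  proof
    assume "socc \<psi>"
    then show "\<psi> \<notin> ?B" using inB[OF \<psi>] f0 unfolding socc_def by blast
  next
    assume nB: "\<psi> \<notin> ?B"
    then obtain c1 where c1: "\<psi> (Rscale c1 f0) \<noteq> 1" using inB[OF \<psi>] by blast
    have chrV: "chr V \<psi>" using \<psi> by simp
    show "socc \<psi>" unfolding socc_def
    proof (intro ballI impI)
      fix f assume f: "f \<in> S" and fc: "\<forall>c. \<psi> (Rscale c f) = 1"
      show "f \<in> I"
      proof (rule ccontr)
        assume fI: "f \<notin> I"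
        obtain i c0 where r: "i \<in> I" "f = i + Rscale c0 f0" using f LeqS unfolding line_def by blast
        have c0: "c0 \<noteq> 0"
        proof
          assume "c0 = 0"
          then have "f = i" using r by (simp add: fun_eq_iff Rscale_def)
          then show False using fI r by simp
        qed
        let ?d = "c1 / c0"
        have eq: "Rscale c1 f0 = Rscale ?d f - Rscale ?d i"
          using r c0 by (simp add: fun_eq_iff Rscale_def field_simps)
        have fV: "f \<in> V" using f S_sub by blast
        have iV: "i \<in> V" using r I_sub by blast
        have "\<psi> (Rscale c1 f0) = \<psi> (Rscale ?d f) / \<psi> (Rscale ?d i)"
          unfolding eq by (rule chr_diff[OF chrV grp_Rcar Rscale_Rcar[OF fV] Rscale_Rcar[OF iV]])
        also have "\<dots> = 1" using fc \<psi> I_scale[OF r(1)] by simp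
        finally show False using c1 by simp
      qed
    qed
  qed
  have "{\<psi>. \<psi> \<in> A \<and> socc \<psi>} = A - ?B" using socc_iff by blast
  then have "card {\<psi>. \<psi> \<in> A \<and> socc \<psi>} = card A - card ?B"
    using card_Diff_subset[OF _ BA] B_count by simp
  moreover have "card ?B \<le> card A" using card_mono[OF _ BA] A_count by simp
  ultimately have "real (card {\<psi>. \<psi> \<in> A \<and> socc \<psi>}) = real (card A) - real (card ?B)" by simp
  moreover have "real (card A) = real (card V) / real (card I)"
    using A_count cardI_pos by (simp add: field_simps flip: of_nat_mult)
  moreover have "real (card ?B) = real (card V) / (real (card (UNIV :: 'a set)) * real (card I))"
    using B_count L(1) cardI_pos q2 by (simp add: field_simps flip: of_nat_mult)
  ultimately show ?thesis using q2 cardI_pos by (simp add: field_simps)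
qed

end


context ctx begin

lemma case2:
  assumes d0: "socle_dim v n I \<noteq> 0" and d1: "socle_dim v n I \<noteq> 1"
  shows "{\<psi>. \<psi> \<in> A \<and> socc \<psi>} = {}"
proof -
  let ?q = "card (UNIV :: 'a set)"
  have q2: "2 \<le> ?q" by (rule card_UNIV_ge2)
  have dd: "2 \<le> socle_dim v n I" using d0 d1 by linarith
  have cS: "card S = ?q ^ socle_dim v n I * card I" using dims unfolding socle_dim_def by simp
  have "?q ^ 2 \<le> ?q ^ socle_dim v n I" using dd q2 by (simp add: power_increasing)
  then have big: "?q * ?q * card I \<le> card S" using cS by (simp add: power2_eq_square)
  have qI: "?q * card I < ?q * ?q * card I" using q2 cardI_pos by simp
  show ?thesis
  proof (rule ccontr)
    assume "{\<psi>. \<psi> \<in> A \<and> socc \<psi>} \<noteq> {}"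
    then obtain \<psi> where \<psi>: "chr V \<psi>" "\<forall>x\<in>I. \<psi> x = 1" "socc \<psi>" by blast
    let ?X = "{\<chi>. chr (UNIV :: 'a set) \<chi>}"
    have X: "finite ?X" "card ?X = ?q" using char_count by auto
    define Phi where "Phi f = (\<lambda>c::'a. \<psi> (Rscale c f))" for f
    have PhiX: "Phi f \<in> ?X" if "f \<in> V" for f
    proof -
      have "chr (UNIV :: 'a set) (Phi f)" unfolding chr_def Phi_def
      proof (intro conjI ballI)
        show "(\<lambda>c. \<psi> (Rscale c f)) \<in> extensional UNIV" by (simp add: extensional_def)
      next
        fix c :: 'a show "cmod (\<psi> (Rscale c f)) = 1" using chr_norm[OF \<psi>(1) Rscale_Rcar[OF that]] .
      next
        fix c d :: 'a
        have "Rscale (c + d) f = Rscale c f + Rscale d f" by (simp add: fun_eq_iff Rscale_def algebra_simps)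
        then show "\<psi> (Rscale (c + d) f) = \<psi> (Rscale c f) * \<psi> (Rscale d f)"
          using chr_add[OF \<psi>(1) Rscale_Rcar[OF that] Rscale_Rcar[OF that]] by simp
      qed
      then show ?thesis by simp
    qed
    define Fb where "Fb \<chi> = {f \<in> S. Phi f = \<chi>}" for \<chi>
    have SU: "S = (\<Union>\<chi>\<in>?X. Fb \<chi>)" unfolding Fb_def using PhiX S_sub by blast
    have "\<exists>\<chi>\<in>?X. card I < card (Fb \<chi>)"
    proof (rule ccontr)
      assume "\<not> (\<exists>\<chi>\<in>?X. card I < card (Fb \<chi>))"
      then have le: "\<And>\<chi>. \<chi> \<in> ?X \<Longrightarrow> card (Fb \<chi>) \<le> card I" by (simp add: not_less)
      have "card S \<le> (\<Sum>\<chi>\<in>?X. card (Fb \<chi>))" unfolding SU by (rule card_UN_le[OF X(1)])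
      also have "\<dots> \<le> (\<Sum>\<chi>\<in>?X. card I)" by (rule sum_mono) (rule le)
      also have "\<dots> = ?q * card I" using X(2) by simp
      finally show False using big qI by linarith
    qed
    then obtain \<chi> where \<chi>: "card I < card (Fb \<chi>)" by blast
    then have "Fb \<chi> \<noteq> {}" by auto
    then obtain f1 where f1: "f1 \<in> Fb \<chi>" by blast
    have finF: "finite (Fb \<chi>)" unfolding Fb_def using finS by simp
    have inj: "inj_on (\<lambda>f. f - f1) (Fb \<chi>)" by (rule inj_onI) simp
    have ci: "card ((\<lambda>f. f - f1) ` Fb \<chi>) = card (Fb \<chi>)" using card_image[OF inj] .
    have "\<not> (\<lambda>f. f - f1) ` Fb \<chi> \<subseteq> I"
    proof
      assume h: "(\<lambda>f. f - f1) ` Fb \<chi> \<subseteq> I"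
      have "card ((\<lambda>f. f - f1) ` Fb \<chi>) \<le> card I" by (rule card_mono[OF finI h])
      then show False using ci \<chi> by simp
    qed
    then obtain f where f: "f \<in> Fb \<chi>" "f - f1 \<notin> I" by blast
    have fS: "f \<in> S" and f1S: "f1 \<in> S" using f f1 unfolding Fb_def by auto
    have ph: "Phi f = Phi f1" using f f1 unfolding Fb_def by simp
    have dS: "f - f1 \<in> S" using grp_diff[OF grp_S fS f1S] .
    have "\<forall>c. \<psi> (Rscale c (f - f1)) = 1"
    proof
      fix c
      have fV: "f \<in> V" and f1V: "f1 \<in> V" using fS f1S S_sub by auto
      have "Rscale c (f - f1) = Rscale c f - Rscale c f1" by (simp add: fun_eq_iff Rscale_def algebra_simps)
      then have "\<psi> (Rscale c (f - f1)) = \<psi> (Rscale c f) / \<psi> (Rscale c f1)"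
        using chr_diff[OF \<psi>(1) grp_Rcar Rscale_Rcar[OF fV] Rscale_Rcar[OF f1V]] by simp
      moreover have "\<psi> (Rscale c f) = \<psi> (Rscale c f1)" using ph unfolding Phi_def by metis
      moreover have "\<psi> (Rscale c f1) \<noteq> 0" using chr_nz[OF \<psi>(1) Rscale_Rcar[OF f1V]] .
      ultimately show "\<psi> (Rscale c (f - f1)) = 1" by simp
    qed
    then have "f - f1 \<in> I" using \<psi>(3) dS unfolding socc_def by blast
    then show False using f(2) by simp
  qed
qed

end

theorem lemma6p3:
  fixes v n :: nat and I :: "((nat \<Rightarrow> nat) \<Rightarrow> 'a::{finite,field}) set"
  assumes "n \<ge> 1" and "v \<ge> 1"
    and "ideal I (Rring v n)"
  shows "real (card {\<psi>. add_char v n \<psi> \<and> I \<subseteq> char_ker v n \<psi> \<and>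
              (\<forall>J. ideal J (Rring v n) \<and> J \<subseteq> char_ker v n \<psi> \<longrightarrow> J \<subseteq> I)})
         = real (card (Rcar v n :: ((nat \<Rightarrow> nat) \<Rightarrow> 'a) set)) / real (card I) *
           (if socle_dim v n I = 0 then 1
            else if socle_dim v n I = 1 then 1 - 1 / real (card (UNIV :: 'a set))
            else 0)"
proof -
  interpret C: ctx v n I by (rule ctx.intro[OF assms(1,3)])
  note T = C.T_eq
  show ?thesis
  proof (cases "socle_dim v n I = 0")
    case True
    have "real (card C.A) = real (card (Rcar v n :: ((nat \<Rightarrow> nat) \<Rightarrow> 'a) set)) / real (card I)"
      using C.A_count C.cardI_pos by (simp add: field_simps flip: of_nat_mult)
    then show ?thesis unfolding T C.case0[OF True] using True by simp
  next
    case F0: False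
    show ?thesis
    proof (cases "socle_dim v n I = 1")
      case True
      then show ?thesis unfolding T using C.case1[OF True] by simp
    next
      case False
      then show ?thesis unfolding T C.case2[OF F0 False] using F0 by simp
    qed
  qed
qed


end
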